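(* Let $\mathcal C=\mathcal C(I,A,(\rho_i)_{i\in I},(C^a)_{a\in A})$ be a connected Cartan scheme and $\mathcal R=\mathcal R(\mathcal C,(R^a)_{a\in A})$ a root system of type $\mathcal C$. Let $a\in A$ and $i,j\in I$ with $i\neq j$. The following are equivalent: (1) $c^a_{ij}=c^a_{ji}=-1$; (2) $R^a\cap(\mathbb N_0\alpha_i+\mathbb N_0\alpha_j)=\{\alpha_i,\alpha_i+\alpha_j,\alpha_j\}$; (3) $m^a_{i,j}=3$.
   Context: Let $I$ be a nonempty finite set and $\{\alpha_i\mid i\in I\}$ the standard basis of $\mathbb Z^I$; $\mathbb N_0=\{0,1,2,\dots\}$. A generalized Cartan matrix is $C=(c_{ij})_{i,j\in I}\in\mathbb Z^{I\times I}$ with $c_{ii}=2$, $c_{jk}\le0$ for $j\ne k$, and $c_{ij}=0\Rightarrow c_{ji}=0$. A Cartan scheme $\mathcal C=\mathcal C(I,A,(\rho_i)_{i\in I},(C^a)_{a\in A})$ consists of a nonempty set $A$, maps $\rho_i:A\to A$ and generalized Cartan matrices $C^a=(c^a_{jk})_{j,k\in I}$ such that (C1) $\rho_i^2=\mathrm{id}$ and (C2) $c^a_{ij}=c^{\rho_i(a)}_{ij}$ for all $a\in A$, $i,j\in I$. It is connected if the group generated by the $\rho_i$ acts transitively on $A$. For $i\in I$, $a\in A$ let $\sigma_i^a\in\mathrm{Aut}(\mathbb Z^I)$, $\sigma_i^a(\alpha_j)=\alpha_j-c^a_{ij}\alpha_i$. A root system of type $\mathcal C$ is a family $\mathcal R=\mathcal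 R(\mathcal C,(R^a)_{a\in A})$ of subsets $R^a\subset\mathbb Z^I$ such that, writing $R^a_+=R^a\cap\mathbb N_0^I$ and $m^a_{i,j}=|R^a\cap(\mathbb N_0\alpha_i+\mathbb N_0\alpha_j)|$, for all $a\in A$, $i,j\in I$: (R1) $R^a=R^a_+\cup(-R^a_+)$; (R2) $R^a\cap\mathbb Z\alpha_i=\{\alpha_i,-\alpha_i\}$; (R3) $\sigma_i^a(R^a)=R^{\rho_i(a)}$; (R4) if $i\neq j$ and $m^a_{i,j}$ is finite then $(\rho_i\rho_j)^{m^a_{i,j}}(a)=a$. *)

theory Defs
  imports Main "HOL-Library.Function_Algebras"
begin

text \<open>The index set I is modelled by a finite type 'i (types are nonempty),
 the set A by a type 'a. Elements of Z^I are functions 'i => int.\<close>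

definition alpha :: "'i \<Rightarrow> ('i \<Rightarrow> int)" where
  "alpha i = (\<lambda>j. if j = i then 1 else 0)"

definition gen_cartan_matrix :: "('i \<Rightarrow> 'i \<Rightarrow> int) \<Rightarrow> bool" where
  "gen_cartan_matrix c \<longleftrightarrow>
     (\<forall>i. c i i = 2) \<and> (\<forall>j k. j \<noteq> k \<longrightarrow> c j k \<le> 0) \<and>
     (\<forall>i j. c i j = 0 \<longrightarrow> c j i = 0)"

definition cartan_scheme ::
  "('i \<Rightarrow> 'a \<Rightarrow> 'a) \<Rightarrow> ('a \<Rightarrow> 'i \<Rightarrow> 'i \<Rightarrow> int) \<Rightarrow> bool" where
  "cartan_scheme \<rho> C \<longleftrightarrow>
     (\<forall>a. gen_cartan_matrix (C a)) \<and>
     (\<forall>i. \<rho> i \<circ> \<rho> i = id) \<and>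
     (\<forall>a i j. C a i j = C (\<rho> i a) i j)"

text \<open>Connectedness: the group generated by the involutions rho_i acts transitively;
 since the generators are involutions, the orbit of a is its closure under the rho_i.\<close>
definition connected_cs :: "('i \<Rightarrow> 'a \<Rightarrow> 'a) \<Rightarrow> bool" where
  "connected_cs \<rho> \<longleftrightarrow> (\<forall>a b. (a, b) \<in> {(x, \<rho> i x) | x i. True}\<^sup>*)"

text \<open>sigma_i^a(alpha_j) = alpha_j - c^a_ij alpha_i, extended Z-linearly.\<close>
definition sigma :: "('a \<Rightarrow> 'i \<Rightarrow> 'i \<Rightarrow> int) \<Rightarrow> 'a \<Rightarrow> 'i \<Rightarrow> ('i::finite \<Rightarrow> int) \<Rightarrow> ('i \<Rightarrow> int)" where
  "sigma C a i v = (\<lambda>k. v k - (\<Sum>j\<in>UNIV. C a i j * v j) * alpha i k)"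

definition pos_roots :: "('a \<Rightarrow> ('i \<Rightarrow> int) set) \<Rightarrow> 'a \<Rightarrow> ('i \<Rightarrow> int) set" where
  "pos_roots R a = R a \<inter> {v. \<forall>k. 0 \<le> v k}"

definition roots_ij :: "('a \<Rightarrow> ('i \<Rightarrow> int) set) \<Rightarrow> 'a \<Rightarrow> 'i \<Rightarrow> 'i \<Rightarrow> ('i \<Rightarrow> int) set" where
  "roots_ij R a i j = R a \<inter> {(\<lambda>k. int n * alpha i k + int m * alpha j k) | n m :: nat. True}"

text \<open>m^a_{i,j}; only meaningful (and only used) when the set is finite.\<close>
definition m_ij :: "('a \<Rightarrow> ('i \<Rightarrow> int) set) \<Rightarrow> 'a \<Rightarrow> 'i \<Rightarrow> 'i \<Rightarrow> nat" where
  "m_ij R a i j = card (roots_ij R a i j)"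

definition root_system ::
  "('i::finite \<Rightarrow> 'a \<Rightarrow> 'a) \<Rightarrow> ('a \<Rightarrow> 'i \<Rightarrow> 'i \<Rightarrow> int) \<Rightarrow> ('a \<Rightarrow> ('i \<Rightarrow> int) set) \<Rightarrow> bool" where
  "root_system \<rho> C R \<longleftrightarrow> cartan_scheme \<rho> C \<and>
     (\<forall>a. R a = pos_roots R a \<union> uminus ` pos_roots R a) \<and>
     (\<forall>a i. R a \<inter> {(\<lambda>k. z * alpha i k) | z :: int. True} = {alpha i, - alpha i}) \<and>
     (\<forall>a i. sigma C a i ` R a = R (\<rho> i a)) \<and>
     (\<forall>a i j. i \<noteq> j \<and> finite (roots_ij R a i j) \<longrightarrow>
        ((\<rho> i \<circ> \<rho> j) ^^ m_ij R a i j) a = a)"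

end

theory Submission
  imports Defs
begin

definition vv :: "'i \<Rightarrow> 'i \<Rightarrow> int \<Rightarrow> int \<Rightarrow> 'i \<Rightarrow> int" where
  "vv i j x y = (\<lambda>k. x * alpha i k + y * alpha j k)"

lemma vv_swap: "vv i j x y = vv j i y x"
  by (auto simp: vv_def)

lemma vv_at: "i \<noteq> j \<Longrightarrow> vv i j x y i = x \<and> vv i j x y j = y"
  by (auto simp: vv_def alpha_def)

lemma vv_eq: "i \<noteq> j \<Longrightarrow> vv i j x y = vv i j x' y' \<longleftrightarrow> x = x' \<and> y = y'"
  by (metis vv_at)

lemma sum_vv:
  fixes f :: "'i::finite \<Rightarrow> int"
  assumes "i \<noteq> j"
  shows "(\<Sum>k\<in>UNIV. f k * vv i j x y k) = f i * x + f j * y"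
proof -
  have "(\<Sum>k\<in>UNIV. f k * vv i j x y k) =
        (\<Sum>k\<in>UNIV. (if k = i then f k * x else 0)) + (\<Sum>k\<in>UNIV. (if k = j then f k * y else 0))"
    unfolding sum.distrib[symmetric]
    by (rule sum.cong) (auto simp: vv_def alpha_def assms)
  then show ?thesis by simp
qed

lemma sigma_vv:
  fixes C :: "'a \<Rightarrow> 'i::finite \<Rightarrow> 'i \<Rightarrow> int"
  assumes "i \<noteq> j"
  shows "sigma C a i (vv i j x y) = vv i j (x - (C a i i * x + C a i j * y)) y"
  unfolding sigma_def sum_vv[OF assms]
  by (auto simp: vv_def alpha_def assms algebra_simps)

lemma rs_cs: "root_system \<rho> C R \<Longrightarrow> cartan_scheme \<rho> C"
  unfolding root_system_def by (elim conjE)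

lemma rs_R1: "root_system \<rho> C R \<Longrightarrow> R a = pos_roots R a \<union> uminus ` pos_roots R a"
  unfolding root_system_def by (elim conjE) (erule spec)

lemma rs_R2set: "root_system \<rho> C R \<Longrightarrow> R a \<inter> {(\<lambda>k. z * alpha i k) | z :: int. True} = {alpha i, - alpha i}"
proof -
  assume "root_system \<rho> C R"
  then have "\<forall>a i. R a \<inter> {(\<lambda>k. z * alpha i k) | z :: int. True} = {alpha i, - alpha i}"
    unfolding root_system_def by (elim conjE) assumption
  then show ?thesis by (elim allE)
qed

lemma rs_R3: "root_system \<rho> C R \<Longrightarrow> sigma C a i ` R a = R (\<rho> i a)"
proof -
  assume "root_system \<rho> C R"
  then have "\<forall>a i. sigma C a i ` R a = R (\<rho> i a)"
    unfolding root_system_def by (elim conjE) assumption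
  then show ?thesis by (elim allE)
qed

lemma rs_pos:
  assumes "root_system \<rho> C R" "v \<in> R b" "v k > 0"
  shows "v k' \<ge> 0"
proof -
  have "R b = pos_roots R b \<union> uminus ` pos_roots R b" by (rule rs_R1[OF assms(1)])
  with assms(2) have "v \<in> pos_roots R b \<or> - v \<in> pos_roots R b" by auto
  then show ?thesis
  proof
    assume "v \<in> pos_roots R b" then show ?thesis unfolding pos_roots_def by blast
  next
    assume "- v \<in> pos_roots R b" then have "(- v) k \<ge> 0" unfolding pos_roots_def by blast
    with assms(3) show ?thesis by simp
  qed
qed

lemma rs_R2:
  assumes "root_system \<rho> C R" "(\<lambda>k. z * alpha i k) \<in> R b"
  shows "z = 1 \<or> z = -1"
proof -
  have "R b \<inter> {(\<lambda>k. z * alpha i k) | z :: int. True} = {alpha i, - alpha i}"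
    by (rule rs_R2set[OF assms(1)])
  with assms(2) have "(\<lambda>k. z * alpha i k) \<in> {alpha i, - alpha i}" by blast
  then have "z * alpha i i = alpha i i \<or> z * alpha i i = - alpha i i" by (auto dest: fun_cong[where x=i])
  then show ?thesis by (simp add: alpha_def)
qed

lemma rs_alpha:
  assumes "root_system \<rho> C R"
  shows "alpha i \<in> R b"
  using rs_R2set[OF assms, of b i] by blast

lemma rs_R2_vv1:
  assumes "root_system \<rho> C R" "vv i j x 0 \<in> R b"
  shows "x = 1 \<or> x = -1"
  using rs_R2[OF assms(1), of x i b] assms(2) by (simp add: vv_def)

lemma rs_R2_vv2:
  assumes "root_system \<rho> C R" "vv i j 0 y \<in> R b"
  shows "y = 1 \<or> y = -1"
  using rs_R2[OF assms(1), of y j b] assms(2) by (simp add: vv_def)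

lemma rs_sigma:
  assumes "root_system \<rho> C R" "v \<in> R b"
  shows "sigma C b i v \<in> R (\<rho> i b)"
  using rs_R3[OF assms(1), of b i] assms(2) by blast

lemma ineq1:
  assumes rs: "root_system \<rho> C R" and ij: "i \<noteq> j" and v: "vv i j n m \<in> R a" and m: "m > 0"
  shows "- n - C a i j * m \<ge> 0"
proof -
  have "gen_cartan_matrix (C a)" using rs_cs[OF rs] unfolding cartan_scheme_def by blast
  then have cii: "C a i i = 2" unfolding gen_cartan_matrix_def by blast
  have "sigma C a i (vv i j n m) \<in> R (\<rho> i a)" using rs_sigma[OF rs v] .
  then have "vv i j (- n - C a i j * m) m \<in> R (\<rho> i a)"
    by (simp add: sigma_vv[OF ij] cii algebra_simps)
  from rs_pos[OF rs this, of j i] show ?thesis using m vv_at[OF ij] by simp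
qed

lemma ineq2:
  assumes rs: "root_system \<rho> C R" and ij: "i \<noteq> j" and v: "vv i j n m \<in> R a" and n: "n > 0"
  shows "- m - C a j i * n \<ge> 0"
  using ineq1[OF rs ij[symmetric], of m n a] v n by (simp add: vv_swap[of i j])

lemma factA:
  assumes rs: "root_system \<rho> C R" and ij: "i \<noteq> j"
  shows "vv i j (- C a i j) 1 \<in> R a"
proof -
  have cs: "cartan_scheme \<rho> C" using rs_cs[OF rs] .
  have "gen_cartan_matrix (C (\<rho> i a))" using cs unfolding cartan_scheme_def by blast
  then have cii: "C (\<rho> i a) i i = 2" unfolding gen_cartan_matrix_def by blast
  have rr: "\<rho> i (\<rho> i a) = a" using cs unfolding cartan_scheme_def by (metis comp_apply id_apply)
  have cc: "C (\<rho> i a) i j = C a i j" using cs unfolding cartan_scheme_def by metis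
  have "alpha j \<in> R (\<rho> i a)" by (rule rs_alpha[OF rs])
  moreover have "alpha j = vv i j 0 1" by (auto simp: vv_def)
  ultimately have "sigma C (\<rho> i a) i (vv i j 0 1) \<in> R a" using rs_sigma[OF rs, of "alpha j" "\<rho> i a" i] rr by simp
  then show ?thesis by (simp add: sigma_vv[OF ij] cii cc)
qed

lemma roots_ij_vv:
  "roots_ij R a i j = R a \<inter> {vv i j x y | x y. 0 \<le> x \<and> 0 \<le> y}"
proof -
  have "{(\<lambda>k. int n * alpha i k + int m * alpha j k) | n m :: nat. True} = {vv i j x y | x y. 0 \<le> x \<and> 0 \<le> y}"
  proof (intro equalityI subsetI)
    fix v assume "v \<in> {(\<lambda>k. int n * alpha i k + int m * alpha j k) | n m :: nat. True}"
    then obtain n m :: nat where "v = (\<lambda>k. int n * alpha i k + int m * alpha j k)" by blast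
    then have "v = vv i j (int n) (int m)" by (simp add: vv_def)
    then show "v \<in> {vv i j x y | x y. 0 \<le> x \<and> 0 \<le> y}" using of_nat_0_le_iff by blast
  next
    fix v assume "v \<in> {vv i j x y | x y. 0 \<le> x \<and> 0 \<le> y}"
    then obtain x y where xy: "v = vv i j x y" "0 \<le> x" "0 \<le> y" by blast
    then have "v = (\<lambda>k. int (nat x) * alpha i k + int (nat y) * alpha j k)" by (simp add: vv_def)
    then show "v \<in> {(\<lambda>k. int n * alpha i k + int m * alpha j k) | n m :: nat. True}" by blast
  qed
  then show ?thesis unfolding roots_ij_def by simp
qed

lemma vv_mem: "0 \<le> p \<Longrightarrow> 0 \<le> q \<Longrightarrow> vv i j p q \<in> {vv i j x y | x y. 0 \<le> x \<and> 0 \<le> y}"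
  by blast

lemma alpha_vv: "alpha i = vv i j 1 0" "alpha j = vv i j 0 1" "alpha i + alpha j = vv i j 1 1"
  by (auto simp: vv_def)

lemma one_two:
  assumes rs: "root_system \<rho> C R" and ij: "i \<noteq> j"
    and c: "C a i j = -1" "C a j i = -1"
  shows "roots_ij R a i j = {vv i j 1 0, vv i j 1 1, vv i j 0 1}"
proof (intro equalityI subsetI)
  fix v assume "v \<in> roots_ij R a i j"
  then obtain n m where v: "v = vv i j n m" "0 \<le> n" "0 \<le> m" "vv i j n m \<in> R a"
    unfolding roots_ij_vv by blast
  show "v \<in> {vv i j 1 0, vv i j 1 1, vv i j 0 1}"
  proof (cases "m = 0")
    case True then show ?thesis using rs_R2_vv1[OF rs, of i j n a] v by auto
  next
    case m: False
    show ?thesis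
    proof (cases "n = 0")
      case True then show ?thesis using rs_R2_vv2[OF rs, of i j m a] v by auto
    next
      case False
      have "n > 0" "m > 0" using m False v(2,3) by auto
      then have "n = m" using ineq1[OF rs ij v(4)] ineq2[OF rs ij v(4)] c by simp
      have "gen_cartan_matrix (C a)" using rs_cs[OF rs] unfolding cartan_scheme_def by blast
      then have cii: "C a i i = 2" unfolding gen_cartan_matrix_def by blast
      have "sigma C a i (vv i j n m) \<in> R (\<rho> i a)" using rs_sigma[OF rs v(4)] .
      then have "vv i j 0 m \<in> R (\<rho> i a)" by (simp add: sigma_vv[OF ij] cii c \<open>n = m\<close>)
      then have "m = 1" using rs_R2_vv2[OF rs] v(3) by fastforce
      then show ?thesis using v \<open>n = m\<close> by simp
    qed
  qed
next
  fix v assume "v \<in> {vv i j 1 0, vv i j 1 1, vv i j 0 1}"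
  moreover have "vv i j 1 0 \<in> R a" "vv i j 0 1 \<in> R a"
    using rs_alpha[OF rs] by (simp_all add: alpha_vv[symmetric])
  moreover have "vv i j 1 1 \<in> R a" using factA[OF rs ij, of a] c by simp
  moreover have P: "vv i j p q \<in> {vv i j x y | x y. 0 \<le> x \<and> 0 \<le> y}" if "0 \<le> p" "0 \<le> q" for p q
    using that by blast
  ultimately show "v \<in> roots_ij R a i j" unfolding roots_ij_vv using P[of 1 0] P[of 1 1] P[of 0 1] by auto
qed

theorem lemma4p8:
  fixes \<rho> :: "'i::finite \<Rightarrow> 'a \<Rightarrow> 'a"
    and C :: "'a \<Rightarrow> 'i \<Rightarrow> 'i \<Rightarrow> int"
    and R :: "'a \<Rightarrow> ('i \<Rightarrow> int) set"
  assumes "cartan_scheme \<rho> C"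
    and "connected_cs \<rho>"
    and "root_system \<rho> C R"
    and "i \<noteq> j"
  shows "(C a i j = -1 \<and> C a j i = -1 \<longleftrightarrow>
            roots_ij R a i j = {alpha i, alpha i + alpha j, alpha j})
       \<and> (roots_ij R a i j = {alpha i, alpha i + alpha j, alpha j} \<longleftrightarrow>
            m_ij R a i j = 3)"
proof -
  note rs = assms(3) and ij = assms(4)
  have S: "{alpha i, alpha i + alpha j, alpha j} = {vv i j 1 0, vv i j 1 1, vv i j 0 1}"
    by (subst alpha_vv(3)[of i j]) (simp only: alpha_vv(1)[where i=i and j=j] alpha_vv(2)[where i=i and j=j])
  have A: "vv i j (- C a i j) 1 \<in> R a" by (rule factA[OF rs ij])
  have B: "vv i j 1 (- C a j i) \<in> R a" using factA[OF rs ij[symmetric], of a] by (simp add: vv_swap[of j i])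
  have "gen_cartan_matrix (C a)" using rs_cs[OF rs] unfolding cartan_scheme_def by blast
  then have Cle: "C a i j \<le> 0" "C a j i \<le> 0" using ij unfolding gen_cartan_matrix_def by auto
  have A': "vv i j (- C a i j) 1 \<in> roots_ij R a i j" using A vv_mem[of "- C a i j" 1 i j] Cle unfolding roots_ij_vv by auto
  have B': "vv i j 1 (- C a j i) \<in> roots_ij R a i j" using B vv_mem[of 1 "- C a j i" i j] Cle unfolding roots_ij_vv by auto
  have d3: "card {vv i j 1 0, vv i j 1 1, vv i j 0 1} = 3" using vv_eq[OF ij] by simp
  have 12: "C a i j = -1 \<and> C a j i = -1 \<Longrightarrow> roots_ij R a i j = {vv i j 1 0, vv i j 1 1, vv i j 0 1}"
    using one_two[OF rs ij] by blast
  have 21: "C a i j = -1 \<and> C a j i = -1" if h: "roots_ij R a i j = {vv i j 1 0, vv i j 1 1, vv i j 0 1}"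
  proof -
    have "vv i j 1 1 \<in> R a" using h unfolding roots_ij_vv by blast
    from ineq1[OF rs ij this] ineq2[OF rs ij this] have "C a i j \<le> -1" "C a j i \<le> -1" by simp_all
    moreover have "vv i j (- C a i j) 1 \<in> {vv i j 1 0, vv i j 1 1, vv i j 0 1}" using A' h by simp
    then have "- C a i j = 1 \<or> - C a i j = 0"
      by (simp only: insert_iff empty_iff vv_eq[OF ij]) simp
    moreover have "vv i j 1 (- C a j i) \<in> {vv i j 1 0, vv i j 1 1, vv i j 0 1}" using B' h by simp
    then have "- C a j i = 0 \<or> - C a j i = 1"
      by (simp only: insert_iff empty_iff vv_eq[OF ij]) simp
    ultimately show ?thesis by linarith
  qed
  have 32: "roots_ij R a i j = {vv i j 1 0, vv i j 1 1, vv i j 0 1}" if h: "m_ij R a i j = 3"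
  proof -
    let ?S = "roots_ij R a i j"
    have fin: "finite ?S" using h unfolding m_ij_def by (metis card.infinite zero_neq_numeral)
    have ai: "vv i j 1 0 \<in> ?S" "vv i j 0 1 \<in> ?S"
      using rs_alpha[OF rs] vv_mem[of 1 0 i j] vv_mem[of 0 1 i j] unfolding roots_ij_vv by (auto simp: alpha_vv[symmetric])
    have "card (?S - {vv i j 1 0, vv i j 0 1}) = 1"
      using h ai fin vv_eq[OF ij] unfolding m_ij_def by (simp add: card_Diff_subset)
    then obtain \<beta> where beta: "?S - {vv i j 1 0, vv i j 0 1} = {\<beta>}" using card_1_singletonE by blast
    then have "\<beta> \<in> ?S" by blast
    then obtain n m where v: "\<beta> = vv i j n m" "0 \<le> n" "0 \<le> m" "vv i j n m \<in> R a"
      unfolding roots_ij_vv by blast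
    have "m \<noteq> 0" using rs_R2_vv1[OF rs, of i j n a] v beta by auto
    moreover have "n \<noteq> 0" using rs_R2_vv2[OF rs, of i j m a] v beta by auto
    ultimately have "n > 0" "m > 0" using v by auto
    have "C a i j < 0"
    proof (rule ccontr)
      assume "\<not> C a i j < 0"
      then have "C a i j * m \<ge> 0" using \<open>m > 0\<close> by simp
      then show False using ineq1[OF rs ij v(4)] \<open>m > 0\<close> \<open>n > 0\<close> by linarith
    qed
    have "C a j i < 0"
    proof (rule ccontr)
      assume "\<not> C a j i < 0"
      then have "C a j i * n \<ge> 0" using \<open>n > 0\<close> by simp
      then show False using ineq2[OF rs ij v(4)] \<open>m > 0\<close> \<open>n > 0\<close> by linarith
    qed
    have "vv i j (- C a i j) 1 \<in> ?S - {vv i j 1 0, vv i j 0 1}"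
    proof (intro DiffI)
      show "vv i j (- C a i j) 1 \<in> ?S" by (rule A')
      have "vv i j (- C a i j) 1 \<noteq> vv i j 1 0" "vv i j (- C a i j) 1 \<noteq> vv i j 0 1"
        using \<open>C a i j < 0\<close> by (simp_all only: vv_eq[OF ij]) simp_all
      then show "vv i j (- C a i j) 1 \<notin> {vv i j 1 0, vv i j 0 1}" by blast
    qed
    then have e1: "vv i j (- C a i j) 1 = \<beta>" unfolding beta by simp
    have "vv i j 1 (- C a j i) \<in> ?S - {vv i j 1 0, vv i j 0 1}"
    proof (intro DiffI)
      show "vv i j 1 (- C a j i) \<in> ?S" by (rule B')
      have "vv i j 1 (- C a j i) \<noteq> vv i j 1 0" "vv i j 1 (- C a j i) \<noteq> vv i j 0 1"
        using \<open>C a j i < 0\<close> by (simp_all only: vv_eq[OF ij]) simp_all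
      then show "vv i j 1 (- C a j i) \<notin> {vv i j 1 0, vv i j 0 1}" by blast
    qed
    then have e2: "vv i j 1 (- C a j i) = \<beta>" unfolding beta by simp
    from e1 e2 have "vv i j (- C a i j) 1 = vv i j 1 (- C a j i)" by simp
    then have "C a i j = -1 \<and> C a j i = -1" using vv_eq[OF ij] by simp
    then show ?thesis by (rule 12)
  qed
  show ?thesis unfolding S
  proof (rule conjI; rule iffI)
    assume "C a i j = -1 \<and> C a j i = -1"
    then show "roots_ij R a i j = {vv i j 1 0, vv i j 1 1, vv i j 0 1}" by (rule 12)
  next
    assume "roots_ij R a i j = {vv i j 1 0, vv i j 1 1, vv i j 0 1}"
    then show "C a i j = -1 \<and> C a j i = -1" by (rule 21)
  next
    assume "roots_ij R a i j = {vv i j 1 0, vv i j 1 1, vv i j 0 1}"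
    then show "m_ij R a i j = 3" using d3 unfolding m_ij_def by simp
  next
    assume "m_ij R a i j = 3"
    then show "roots_ij R a i j = {vv i j 1 0, vv i j 1 1, vv i j 0 1}" by (rule 32)
  qed
qed

end
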